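(* Let $\mathfrak{g}$ be a semisimple Lie algebra, $A=\mathbb{C}\oplus A_+$ with $A_+=\bigoplus_{i>0}A_i$ a $\mathbb{Z}_{\ge0}$-graded commutative unital algebra, and let $x,y:A_+\to\mathbb{C}$ be two linearly independent linear maps vanishing on $A_+^2$. Let $\{e_i\}$ be an orthonormal basis of $\mathfrak{g}$ for the Killing form and $\{e^i\}$ the dual basis of $\mathfrak{g}^*$. For $u\in\mathfrak{g}^*$ and $z:A_+\to\mathbb{C}$ let $uz$ denote the linear functional $a\otimes b\mapsto u(a)z(b)$ on $\mathfrak{g}\otimes A_+$. Then $$\varphi_{x,y}=\sum_{i=1}^{\dim\mathfrak{g}}e^ix\wedge e^iy\in\mathrm{Hom}(\Lambda^2(\mathfrak{g}\otimes A_+),\mathbb{C})$$ is a cocycle in the relative Chevalley–Eilenberg complex $C^\bullet(\mathfrak{g}\otimes A,\mathfrak{g};\mathbb{C})=\mathrm{Hom}_{\mathfrak{g}}(\Lambda^\bullet(\mathfrak{g}\otimes A_+),\mathbb{C})$ whose class in $H^2(\mathfrak{g}\otimes A,\mathfrak{g};\mathbb{C})$ is nonzero.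
   Context: $\mathfrak{g}\otimes A$ is the current Lie algebra with bracket $[a\otimes u,b\otimes v]=[a,b]\otimes uv$; it contains $\mathfrak g=\mathfrak g\otimes 1$, and $(\mathfrak g\otimes A)/\mathfrak g\cong\mathfrak g\otimes A_+$ as $\mathfrak g$-modules. $H^\bullet(\mathfrak{g}\otimes A,\mathfrak{g};\mathbb{C})$ is relative Lie algebra cohomology with trivial coefficients. *)

theory Defs
  imports Complex_Main
begin

definition lie_algebra :: "(complex \<Rightarrow> 'g::ab_group_add \<Rightarrow> 'g) \<Rightarrow> ('g \<Rightarrow> 'g \<Rightarrow> 'g) \<Rightarrow> bool" where
  "lie_algebra sG br \<longleftrightarrow>
     vector_space sG \<and>
     (\<forall>a. Vector_Spaces.linear sG sG (br a)) \<and>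
     (\<forall>b. Vector_Spaces.linear sG sG (\<lambda>a. br a b)) \<and>
     (\<forall>a. br a a = 0) \<and>
     (\<forall>a b c. br a (br b c) + br b (br c a) + br c (br a b) = 0)"

definition fin_dim :: "(complex \<Rightarrow> 'g::ab_group_add \<Rightarrow> 'g) \<Rightarrow> bool" where
  "fin_dim sG \<longleftrightarrow> (\<exists>B. finite B \<and> module.span sG B = UNIV)"

definition lie_ideal :: "(complex \<Rightarrow> 'g::ab_group_add \<Rightarrow> 'g) \<Rightarrow> ('g \<Rightarrow> 'g \<Rightarrow> 'g) \<Rightarrow> 'g set \<Rightarrow> bool" where
  "lie_ideal sG br I \<longleftrightarrow> module.subspace sG I \<and> (\<forall>a b. b \<in> I \<longrightarrow> br a b \<in> I)"

primrec derived :: "(complex \<Rightarrow> 'g::ab_group_add \<Rightarrow> 'g) \<Rightarrow> ('g \<Rightarrow> 'g \<Rightarrow> 'g) \<Rightarrow> 'g set \<Rightarrow> nat \<Rightarrow> 'g set" where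
  "derived sG br I 0 = I"
| "derived sG br I (Suc k) =
     module.span sG {br a b | a b. a \<in> derived sG br I k \<and> b \<in> derived sG br I k}"

definition solvable_ideal :: "(complex \<Rightarrow> 'g::ab_group_add \<Rightarrow> 'g) \<Rightarrow> ('g \<Rightarrow> 'g \<Rightarrow> 'g) \<Rightarrow> 'g set \<Rightarrow> bool" where
  "solvable_ideal sG br I \<longleftrightarrow> lie_ideal sG br I \<and> (\<exists>k. derived sG br I k = {0})"

definition semisimple :: "(complex \<Rightarrow> 'g::ab_group_add \<Rightarrow> 'g) \<Rightarrow> ('g \<Rightarrow> 'g \<Rightarrow> 'g) \<Rightarrow> bool" where
  "semisimple sG br \<longleftrightarrow> lie_algebra sG br \<and> fin_dim sG \<and> (UNIV :: 'g set) \<noteq> {0} \<and>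
     (\<forall>I. solvable_ideal sG br I \<longrightarrow> I = {0})"

text \<open>Trace of an endomorphism of a finite-dimensional space, computed in a
(chosen) basis; basis independent.\<close>
definition lin_trace :: "(complex \<Rightarrow> 'g::ab_group_add \<Rightarrow> 'g) \<Rightarrow> ('g \<Rightarrow> 'g) \<Rightarrow> complex" where
  "lin_trace sG f =
    (let B = (SOME B. \<not> module.dependent sG B \<and> module.span sG B = UNIV)
     in \<Sum>b\<in>B. module.representation sG B (f b) b)"

definition killing :: "(complex \<Rightarrow> 'g::ab_group_add \<Rightarrow> 'g) \<Rightarrow> ('g \<Rightarrow> 'g \<Rightarrow> 'g) \<Rightarrow> 'g \<Rightarrow> 'g \<Rightarrow> complex" where
  "killing sG br a b = lin_trace sG (\<lambda>v. br a (br b v))"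

definition graded_comm_algebra :: "(complex \<Rightarrow> 'a::comm_ring_1 \<Rightarrow> 'a) \<Rightarrow> (nat \<Rightarrow> 'a set) \<Rightarrow> bool" where
  "graded_comm_algebra sA Agr \<longleftrightarrow>
     vector_space sA \<and>
     (\<forall>c p q. sA c (p * q) = sA c p * q) \<and>
     (\<forall>i. module.subspace sA (Agr i)) \<and>
     (\<forall>p. \<exists>!f. finite {i. f i \<noteq> 0} \<and> (\<forall>i. f i \<in> Agr i) \<and> p = (\<Sum>i\<in>{i. f i \<noteq> 0}. f i)) \<and>
     (\<forall>i j p q. p \<in> Agr i \<longrightarrow> q \<in> Agr j \<longrightarrow> p * q \<in> Agr (i + j)) \<and>
     Agr 0 = range (\<lambda>c. sA c 1)"

definition aug_ideal :: "(complex \<Rightarrow> 'a::comm_ring_1 \<Rightarrow> 'a) \<Rightarrow> (nat \<Rightarrow> 'a set) \<Rightarrow> 'a set" where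
  "aug_ideal sA Agr = module.span sA (\<Union>i\<in>{0<..}. Agr i)"

definition linear_on :: "(complex \<Rightarrow> 'a::ab_group_add \<Rightarrow> 'a) \<Rightarrow> 'a set \<Rightarrow> ('a \<Rightarrow> complex) \<Rightarrow> bool" where
  "linear_on sA S x \<longleftrightarrow> (\<forall>p\<in>S. \<forall>q\<in>S. \<forall>c. x (sA c p + q) = c * x p + x q)"

text \<open>An n-cochain on g \<otimes> A_+ is represented by its values on n-tuples of
pure tensors a \<otimes> u (a list of pairs (a,u), u \<in> A_+); by the universal property
of the tensor product, multilinear maps on g \<otimes> A_+ correspond to maps which are
linear in each a_k and each u_k separately.  Only the values on arguments in
A_+ are meaningful.\<close>

definition args_ok :: "'a set \<Rightarrow> nat \<Rightarrow> ('g \<times> 'a) list \<Rightarrow> bool" where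
  "args_ok S n zs \<longleftrightarrow> length zs = n \<and> (\<forall>z\<in>set zs. snd z \<in> S)"

text \<open>Elements of Hom_g(\<Lambda>^n(g \<otimes> A_+), C): multilinear, alternating
(antisymmetric under transpositions; equivalent over C) and g-invariant.\<close>
definition rel_cochain ::
  "(complex \<Rightarrow> 'g::ab_group_add \<Rightarrow> 'g) \<Rightarrow> ('g \<Rightarrow> 'g \<Rightarrow> 'g) \<Rightarrow>
   (complex \<Rightarrow> 'a::comm_ring_1 \<Rightarrow> 'a) \<Rightarrow> 'a set \<Rightarrow> nat \<Rightarrow> (('g \<times> 'a) list \<Rightarrow> complex) \<Rightarrow> bool" where
  "rel_cochain sG br sA S n \<omega> \<longleftrightarrow>
     (\<forall>zs k. args_ok S n zs \<longrightarrow> k < n \<longrightarrow>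
        (\<forall>c a b. \<omega> (zs[k := (sG c a + b, snd (zs!k))])
                  = c * \<omega> (zs[k := (a, snd (zs!k))]) + \<omega> (zs[k := (b, snd (zs!k))])) \<and>
        (\<forall>c u v. u \<in> S \<longrightarrow> v \<in> S \<longrightarrow> \<omega> (zs[k := (fst (zs!k), sA c u + v)])
                  = c * \<omega> (zs[k := (fst (zs!k), u)]) + \<omega> (zs[k := (fst (zs!k), v)]))) \<and>
     (\<forall>zs i j. args_ok S n zs \<longrightarrow> i < n \<longrightarrow> j < n \<longrightarrow> i \<noteq> j \<longrightarrow>
        \<omega> (zs[i := zs!j, j := zs!i]) = - \<omega> zs) \<and>
     (\<forall>zs c. args_ok S n zs \<longrightarrow>
        (\<Sum>k<n. \<omega> (zs[k := (br c (fst (zs!k)), snd (zs!k))])) = 0)"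

definition del2 :: "nat \<Rightarrow> nat \<Rightarrow> 'b list \<Rightarrow> 'b list" where
  "del2 i j zs = map (\<lambda>k. zs!k) (filter (\<lambda>k. k \<noteq> i \<and> k \<noteq> j) [0..<length zs])"

text \<open>Chevalley--Eilenberg differential with trivial coefficients, evaluated on
pure tensors, using [a \<otimes> u, b \<otimes> v] = [a,b] \<otimes> uv:
 d\<omega>(z_0,...,z_n) = \<Sum>_{i<j} (-1)^(i+j) \<omega>([z_i,z_j], z_0,..^i..^j..,z_n).\<close>
definition ce_diff :: "('g \<Rightarrow> 'g \<Rightarrow> 'g) \<Rightarrow> (('g \<times> 'a::comm_ring_1) list \<Rightarrow> complex) \<Rightarrow> ('g \<times> 'a) list \<Rightarrow> complex" where
  "ce_diff br \<omega> zs =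
     (\<Sum>j<length zs. \<Sum>i<j. (-1::complex) ^ (i + j) *
        \<omega> ((br (fst (zs!i)) (fst (zs!j)), snd (zs!i) * snd (zs!j)) # del2 i j zs))"

definition tens_fun :: "('g \<Rightarrow> complex) \<Rightarrow> ('a \<Rightarrow> complex) \<Rightarrow> ('g \<times> 'a) \<Rightarrow> complex" where
  "tens_fun u z p = u (fst p) * z (snd p)"

definition wedge1 :: "(('g \<times> 'a) \<Rightarrow> complex) \<Rightarrow> (('g \<times> 'a) \<Rightarrow> complex) \<Rightarrow> ('g \<times> 'a) list \<Rightarrow> complex" where
  "wedge1 \<alpha> \<beta> zs = \<alpha> (zs!0) * \<beta> (zs!1) - \<alpha> (zs!1) * \<beta> (zs!0)"

definition phi_xy :: "nat \<Rightarrow> (nat \<Rightarrow> 'g \<Rightarrow> complex) \<Rightarrow> ('a \<Rightarrow> complex) \<Rightarrow> ('a \<Rightarrow> complex) \<Rightarrow> ('g \<times> 'a) list \<Rightarrow> complex" where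
  "phi_xy n estar x y zs = (\<Sum>i<n. wedge1 (tens_fun (estar i) x) (tens_fun (estar i) y) zs)"

end

theory Submission imports Defs begin

locale cvs = vector_space sG for sG :: "complex \<Rightarrow> 'g::ab_group_add \<Rightarrow> 'g" +
  fixes n :: nat and e :: "nat \<Rightarrow> 'g" and estar :: "nat \<Rightarrow> 'g \<Rightarrow> complex"
  assumes inj: "inj_on e {..<n}" and indep: "\<not> dependent (e ` {..<n})"
    and sp: "span (e ` {..<n}) = UNIV"
    and esl: "\<And>i. i < n \<Longrightarrow> Vector_Spaces.linear sG (*) (estar i)"
    and dual: "\<And>i j. i < n \<Longrightarrow> j < n \<Longrightarrow> estar i (e j) = (if i = j then 1 else 0)"
begin

lemma decomp: "a = (\<Sum>i<n. sG (estar i a) (e i))"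
proof -
  have "a \<in> span (e ` {..<n})" using sp by simp
  then obtain u where u: "a = (\<Sum>v\<in>e ` {..<n}. sG (u v) v)"
    using span_finite[of "e ` {..<n}"] by blast
  hence a: "a = (\<Sum>i<n. sG (u (e i)) (e i))" using sum.reindex[OF inj, of "\<lambda>v. sG (u v) v"] by (simp add: o_def)
  have "estar j a = u (e j)" if "j < n" for j
  proof -
    interpret l: Vector_Spaces.linear sG "(*)" "estar j" using esl that by simp
    have "estar j a = (\<Sum>i<n. u (e i) * estar j (e i))"
      by (subst a) (simp add: l.sum l.scale)
    also have "\<dots> = (\<Sum>i<n. if i = j then u (e j) else 0)"
      using that by (intro sum.cong) (auto simp: dual)
    finally show ?thesis using that by simp
  qed
  hence "(\<Sum>i<n. sG (estar i a) (e i)) = (\<Sum>i<n. sG (u (e i)) (e i))" by simp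
  thus ?thesis using a by simp
qed

definition TB where "TB = (SOME B. \<not> dependent B \<and> span B = UNIV)"

lemma TB: "independent TB" "span TB = UNIV" "finite TB"
  "lin_trace sG f = (\<Sum>b\<in>TB. representation TB (f b) b)"
proof -
  have ex: "\<exists>B. \<not> dependent B \<and> span B = UNIV" using indep sp by blast
  have B: "\<not> dependent TB \<and> span TB = UNIV" unfolding TB_def using someI_ex[OF ex] .
  thus "independent TB" "span TB = UNIV" by auto
  show "finite TB" using independent_span_bound[of "e ` {..<n}" TB] B sp by auto
  show "lin_trace sG f = (\<Sum>b\<in>TB. representation TB (f b) b)"
    unfolding lin_trace_def Let_def TB_def by simp
qed

lemma tr_add: "lin_trace sG (\<lambda>v. sG c (f v) + g v) = c * lin_trace sG f + lin_trace sG g"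
proof -
  note B = TB
  show ?thesis using B
    by (simp add: representation_add representation_scale sum.distrib sum_distrib_left)
qed

lemma tr_diff: "lin_trace sG (\<lambda>v. f v - g v) = lin_trace sG f - lin_trace sG g"
proof -
  note B = TB
  show ?thesis using B
    by (simp add: representation_diff sum_subtractf)
qed

lemma rep_comp:
  assumes B: "independent B" "span B = UNIV" "finite B" and f: "Vector_Spaces.linear sG sG f"
  shows "representation B (f w) b = (\<Sum>b'\<in>B. representation B w b' * representation B (f b') b)"
proof -
  interpret l: Vector_Spaces.linear sG sG f by fact
  have "w = (\<Sum>b'\<in>B. sG (representation B w b') b')"
    using sum_representation_eq[of B w B] B by simp
  hence "f w = (\<Sum>b'\<in>B. sG (representation B w b') (f b'))"
    by (metis (no_types, lifting) l.scale l.sum sum.cong)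
  thus ?thesis using B by (simp add: representation_sum representation_scale)
qed

lemma tr_cyc:
  assumes f: "Vector_Spaces.linear sG sG f" and g: "Vector_Spaces.linear sG sG g"
  shows "lin_trace sG (\<lambda>v. f (g v)) = lin_trace sG (\<lambda>v. g (f v))"
proof -
  note B = TB
  have "lin_trace sG (\<lambda>v. f (g v)) = (\<Sum>b\<in>TB. \<Sum>b'\<in>TB. representation TB (g b) b' * representation TB (f b') b)"
    unfolding B(4) by (intro sum.cong refl rep_comp[OF B(1-3) f])
  also have "\<dots> = (\<Sum>b'\<in>TB. \<Sum>b\<in>TB. representation TB (g b) b' * representation TB (f b') b)"
    by (rule sum.swap)
  also have "\<dots> = lin_trace sG (\<lambda>v. g (f v))"
    unfolding B(4)
  proof (rule sum.cong[OF refl])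
    fix b' assume "b' \<in> TB"
    show "(\<Sum>b\<in>TB. representation TB (g b) b' * representation TB (f b') b) = representation TB (g (f b')) b'"
      using rep_comp[OF B(1-3) g, of "f b'" b'] by (simp add: mult.commute)
  qed
  finally show ?thesis .
qed

end
lemma vs_C: "vector_space ((*)::complex\<Rightarrow>complex\<Rightarrow>complex)"
  by (unfold_locales; simp add: algebra_simps)

locale lie = cvs sG n e estar for sG :: "complex \<Rightarrow> 'g::ab_group_add \<Rightarrow> 'g" and n e estar +
  fixes br :: "'g \<Rightarrow> 'g \<Rightarrow> 'g"
  assumes brl: "\<And>a. Vector_Spaces.linear sG sG (br a)"
    and brr: "\<And>b. Vector_Spaces.linear sG sG (\<lambda>a. br a b)"
    and alt: "\<And>a. br a a = 0"
    and jac: "\<And>a b c. br a (br b c) + br b (br c a) + br c (br a b) = 0"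
    and orth: "\<And>i j. i < n \<Longrightarrow> j < n \<Longrightarrow> killing sG br (e i) (e j) = (if i = j then 1 else 0)"
begin

lemma brl_add: "br a (sG c u + v) = sG c (br a u) + br a v"
proof -
  interpret l: Vector_Spaces.linear sG sG "br a" by (rule brl)
  show ?thesis by (simp add: l.add l.scale)
qed

lemma brr_add: "br (sG c u + v) b = sG c (br u b) + br v b"
proof -
  interpret l: Vector_Spaces.linear sG sG "\<lambda>a. br a b" by (rule brr)
  show ?thesis using l.add l.scale by simp
qed

lemma brl_diff: "br a (u - v) = br a u - br a v"
proof -
  interpret l: Vector_Spaces.linear sG sG "br a" by (rule brl)
  show ?thesis by (simp add: l.diff)
qed

lemma anti: "br a b = - br b a"
proof -
  have 1: "br (a+b) (a+b) = br a (a+b) + br b (a+b)" using brr_add[of 1 a b "a+b"] by simp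
  have 2: "br a (a+b) = br a a + br a b" using brl_add[of a 1 a b] by simp
  have 3: "br b (a+b) = br b a + br b b" using brl_add[of b 1 a b] by simp
  have "br a b + br b a = 0" using 1 2 3 alt[of "a+b"] alt[of a] alt[of b] by (simp add: add.assoc)
  thus ?thesis by (simp add: eq_neg_iff_add_eq_0)
qed

lemma br_zero: "br a 0 = 0"
  using brl_diff[of a 0 0] by simp

lemma ad_br: "br (br c a) v = br c (br a v) - br a (br c v)"
proof -
  have "br c (br a v) + br a (br v c) + br v (br c a) = 0" by (rule jac)
  moreover have "br a (br v c) = - br a (br c v)"
    using anti[of v c] brl_diff[of a 0 "br c v"] by (simp add: br_zero)
  moreover have "br v (br c a) = - br (br c a) v" by (rule anti)
  ultimately show ?thesis by (simp add: algebra_simps)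
qed

abbreviation K where "K \<equiv> killing sG br"

lemma K_left: "K (sG c a + a') b = c * K a b + K a' b"
  unfolding killing_def by (simp add: brr_add tr_add)

lemma K_right: "K a (sG c b + b') = c * K a b + K a b'"
  unfolding killing_def by (simp add: brr_add brl_add tr_add)

lemma K_lin_left: "Vector_Spaces.linear sG (*) (\<lambda>a. K a b)"
proof -
  have add: "K (a + a') b = K a b + K a' b" for a a' using K_left[of 1 a a' b] by simp
  have z: "K 0 b = 0" using add[of 0 0] by simp
  have sc: "K (sG c a) b = c * K a b" for c a using K_left[of c a 0 b] z by simp
  show ?thesis by (simp add: Vector_Spaces.linear_iff vs_C vector_space_axioms add sc)
qed

lemma K_lin_right: "Vector_Spaces.linear sG (*) (\<lambda>b. K a b)"
proof -
  have add: "K a (b + b') = K a b + K a b'" for b b' using K_right[of a 1 b b'] by simp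
  have z: "K a 0 = 0" using add[of 0 0] by simp
  have sc: "K a (sG c b) = c * K a b" for c b using K_right[of a c b 0] z by simp
  show ?thesis by (simp add: Vector_Spaces.linear_iff vs_C vector_space_axioms add sc)
qed

lemma K_inv: "K (br c a) b + K a (br c b) = 0"
proof -
  have l1: "K (br c a) b = lin_trace sG (\<lambda>v. br c (br a (br b v))) - lin_trace sG (\<lambda>v. br a (br c (br b v)))"
    unfolding killing_def by (simp add: ad_br tr_diff)
  have l2: "K a (br c b) = lin_trace sG (\<lambda>v. br a (br c (br b v))) - lin_trace sG (\<lambda>v. br a (br b (br c v)))"
    unfolding killing_def by (simp add: ad_br brl_diff tr_diff)
  have lin2: "Vector_Spaces.linear sG sG (\<lambda>v. br a (br b v))"
    using Vector_Spaces.linear_compose[OF brl[of b] brl[of a]] by (simp add: o_def)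
  have "lin_trace sG (\<lambda>v. br c (br a (br b v))) = lin_trace sG (\<lambda>v. br a (br b (br c v)))"
    using tr_cyc[OF brl[of c] lin2] by simp
  thus ?thesis using l1 l2 by simp
qed

lemma K_M: "K a b = (\<Sum>i<n. estar i a * estar i b)"
proof -
  interpret l: Vector_Spaces.linear sG "(*)" "\<lambda>a. K a b" by (rule K_lin_left)
  have "K a b = K (\<Sum>i<n. sG (estar i a) (e i)) b" by (subst decomp[of a]) simp
  also have "\<dots> = (\<Sum>i<n. estar i a * K (e i) b)" by (simp add: l.sum l.scale)
  also have "\<dots> = (\<Sum>i<n. estar i a * estar i b)"
  proof (rule sum.cong)
    fix i assume i: "i \<in> {..<n}"
    interpret r: Vector_Spaces.linear sG "(*)" "\<lambda>b. K (e i) b" by (rule K_lin_right)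
    have "K (e i) b = K (e i) (\<Sum>j<n. sG (estar j b) (e j))" by (subst decomp[of b]) simp
    also have "\<dots> = (\<Sum>j<n. estar j b * K (e i) (e j))" by (simp add: r.sum r.scale)
    also have "\<dots> = (\<Sum>j<n. if j = i then estar i b else 0)"
      using i by (intro sum.cong) (auto simp: orth)
    finally show "estar i a * K (e i) b = estar i a * estar i b" using i by simp
  qed simp
  finally show ?thesis .
qed

lemma M_inv: "(\<Sum>i<n. estar i (br c a) * estar i b) + (\<Sum>i<n. estar i a * estar i (br c b)) = 0"
  using K_inv[of c a b] by (simp add: K_M)

lemma M_lin: "(\<Sum>i<n. estar i (sG c a + a') * estar i b) = c * (\<Sum>i<n. estar i a * estar i b) + (\<Sum>i<n. estar i a' * estar i b)"
  using K_left[of c a a' b] by (simp add: K_M)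

lemma M_lin2: "(\<Sum>i<n. estar i b * estar i (sG c a + a')) = c * (\<Sum>i<n. estar i b * estar i a) + (\<Sum>i<n. estar i b * estar i a')"
  using K_right[of b c a a'] by (simp add: K_M)

lemma n_pos: "UNIV \<noteq> {0::'g} \<Longrightarrow> 0 < n"
  using sp by (cases n) auto

lemma M_e0: "0 < n \<Longrightarrow> (\<Sum>i<n. estar i (e 0) * estar i (e 0)) = 1"
proof -
  assume n: "0 < n"
  have "(\<Sum>i<n. estar i (e 0) * estar i (e 0)) = (\<Sum>i<n. if i = 0 then 1 else 0)"
    using n by (intro sum.cong) (auto simp: dual)
  thus ?thesis using n by simp
qed
end

lemma phi_eq: "phi_xy n estar x y zs = (\<Sum>i<n. estar i (fst (zs!0)) * estar i (fst (zs!1))) *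
   (x (snd (zs!0)) * y (snd (zs!1)) - x (snd (zs!1)) * y (snd (zs!0)))"
  unfolding phi_xy_def wedge1_def tens_fun_def sum_distrib_right
  by (intro sum.cong) (auto simp: algebra_simps)

lemma prod_closed:
  assumes vs: "vector_space sA" and sc: "\<forall>c p q. sA c (p * q) = sA c p * q"
    and gm: "\<forall>i j p q. p \<in> Agr i \<longrightarrow> q \<in> Agr j \<longrightarrow> p * q \<in> Agr (i + j)"
    and p: "p \<in> aug_ideal sA Agr" and q: "q \<in> aug_ideal sA Agr"
  shows "p * q \<in> aug_ideal sA Agr"
proof -
  interpret vector_space sA by fact
  let ?G = "\<Union>i\<in>{0<..}. Agr i"
  have sc2: "p * sA c q = sA c (p * q)" for p q c
    using sc by (metis mult.commute)
  have inner: "p * q \<in> span ?G" if p: "p \<in> ?G" and q: "q \<in> span ?G" for p q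
    using q
  proof (induct rule: span_induct)
    case base show ?case
      unfolding subspace_def
      by (auto simp: sc2 distrib_left span_zero intro: span_add span_scale)
  next
    case (step q)
    obtain j where j: "0 < j" "q \<in> Agr j" using step by auto
    obtain i where i: "0 < i" "p \<in> Agr i" using p by auto
    have "p * q \<in> Agr (i + j)" using gm i j by blast
    hence "p * q \<in> ?G" using i j by auto
    then show ?case by (rule span_base)
  qed
  have "p * q \<in> span ?G" using p unfolding aug_ideal_def
  proof (induct rule: span_induct)
    case base show ?case
      unfolding subspace_def
      by (auto simp: sc[rule_format, symmetric] distrib_right span_zero intro: span_add span_scale)
  next
    case (step p)
    then show ?case using inner q unfolding aug_ideal_def by auto
  qed
  thus ?thesis unfolding aug_ideal_def .
qed

lemma D_ne:
  assumes xyind: "\<forall>c d. (\<forall>p\<in>S. c * x p + d * y p = 0) \<longrightarrow> c = 0 \<and> d = 0"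
  shows "\<exists>p\<in>S. \<exists>q\<in>S. x p * y q - x q * y p \<noteq> (0::complex)"
proof (rule ccontr)
  assume h: "\<not> ?thesis"
  have "\<exists>p\<in>S. x p \<noteq> 0" using xyind[rule_format, of 1 0] by auto
  then obtain p where p: "p \<in> S" "x p \<noteq> 0" by blast
  have "\<forall>q\<in>S. y p * x q + (- x p) * y q = 0"
  proof
    fix q assume q: "q \<in> S"
    have "x p * y q - x q * y p = 0" using h p q by blast
    thus "y p * x q + (- x p) * y q = 0" by (simp add: algebra_simps)
  qed
  hence "y p = 0 \<and> - x p = 0" using xyind by blast
  thus False using p by simp
qed

theorem lemma4p14:
  fixes sG :: "complex \<Rightarrow> 'g::ab_group_add \<Rightarrow> 'g"
    and br :: "'g \<Rightarrow> 'g \<Rightarrow> 'g"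
    and sA :: "complex \<Rightarrow> 'a::comm_ring_1 \<Rightarrow> 'a"
    and Agr :: "nat \<Rightarrow> 'a set"
    and x y :: "'a \<Rightarrow> complex"
    and n :: nat and e :: "nat \<Rightarrow> 'g" and estar :: "nat \<Rightarrow> 'g \<Rightarrow> complex"
  assumes ss: "semisimple sG br"
    and gr: "graded_comm_algebra sA Agr"
    and xlin: "linear_on sA (aug_ideal sA Agr) x"
    and ylin: "linear_on sA (aug_ideal sA Agr) y"
    and xsq: "\<forall>p\<in>aug_ideal sA Agr. \<forall>q\<in>aug_ideal sA Agr. x (p * q) = 0"
    and ysq: "\<forall>p\<in>aug_ideal sA Agr. \<forall>q\<in>aug_ideal sA Agr. y (p * q) = 0"
    and xyind: "\<forall>c d. (\<forall>p\<in>aug_ideal sA Agr. c * x p + d * y p = 0) \<longrightarrow> c = 0 \<and> d = 0"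
    and ebasis: "inj_on e {..<n}" "\<not> module.dependent sG (e ` {..<n})"
      "module.span sG (e ` {..<n}) = UNIV"
    and eorth: "\<forall>i<n. \<forall>j<n. killing sG br (e i) (e j) = (if i = j then 1 else 0)"
    and edual: "\<forall>i<n. Vector_Spaces.linear sG (*) (estar i)"
      "\<forall>i<n. \<forall>j<n. estar i (e j) = (if i = j then 1 else 0)"
  shows "rel_cochain sG br sA (aug_ideal sA Agr) 2 (phi_xy n estar x y) \<and>
         (\<forall>zs. args_ok (aug_ideal sA Agr) 3 zs \<longrightarrow> ce_diff br (phi_xy n estar x y) zs = 0) \<and>
         \<not> (\<exists>\<psi>. rel_cochain sG br sA (aug_ideal sA Agr) 1 \<psi> \<and>
               (\<forall>zs. args_ok (aug_ideal sA Agr) 2 zs \<longrightarrow>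
                      phi_xy n estar x y zs = ce_diff br \<psi> zs))"
proof -
  let ?S = "aug_ideal sA Agr"
  let ?M = "\<lambda>a b. (\<Sum>i<n. estar i a * estar i b)"
  let ?D = "\<lambda>u v. x u * y v - x v * y u"
  have la: "lie_algebra sG br" and nz: "(UNIV::'g set) \<noteq> {0}" using ss unfolding semisimple_def by auto
  interpret L: lie sG n e estar br
    using la ebasis eorth edual unfolding lie_algebra_def lie_def lie_axioms_def cvs_def cvs_axioms_def
    by auto
  have phi2: "phi_xy n estar x y [(a0,u0),(a1,u1)] = ?M a0 a1 * ?D u0 u1" for a0 u0 a1 u1
    by (simp add: phi_eq)
  have Dl1: "?D (sA c u + v) w = c * ?D u w + ?D v w" if "u \<in> ?S" "v \<in> ?S" for c u v w
  proof -
    have "x (sA c u + v) = c * x u + x v" "y (sA c u + v) = c * y u + y v"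
      using xlin ylin that unfolding linear_on_def by blast+
    thus ?thesis by (simp add: algebra_simps)
  qed
  have Dl2: "?D w (sA c u + v) = c * ?D w u + ?D w v" if "u \<in> ?S" "v \<in> ?S" for c u v w
  proof -
    have "x (sA c u + v) = c * x u + x v" "y (sA c u + v) = c * y u + y v"
      using xlin ylin that unfolding linear_on_def by blast+
    thus ?thesis by (simp add: algebra_simps)
  qed
  have two: "\<exists>z0 z1. zs = [z0, z1]" if "length zs = 2" for zs :: "('g \<times> 'a) list"
    using that by (auto simp: length_Suc_conv numeral_2_eq_2)
  have part1: "rel_cochain sG br sA ?S 2 (phi_xy n estar x y)"
    unfolding rel_cochain_def
  proof (intro conjI allI impI)
    fix zs :: "('g \<times> 'a) list" and k :: nat and c a b
    assume ok: "args_ok ?S 2 zs" and k: "k < 2"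
    obtain a0 u0 a1 u1 where zs: "zs = [(a0,u0),(a1,u1)]" using two ok unfolding args_ok_def by fastforce
    have k01: "k = 0 \<or> k = 1" using k by auto
    show "phi_xy n estar x y (zs[k := (sG c a + b, snd (zs ! k))]) =
             c * phi_xy n estar x y (zs[k := (a, snd (zs ! k))]) + phi_xy n estar x y (zs[k := (b, snd (zs ! k))])"
      using k01
    proof
      assume "k = 0" thus ?thesis by (simp add: zs phi2 L.M_lin distrib_right mult.assoc)
    next
      assume "k = 1" thus ?thesis by (simp add: zs phi2 L.M_lin2 distrib_right mult.assoc)
    qed
  next
    fix zs :: "('g \<times> 'a) list" and k :: nat and c u v
    assume ok: "args_ok ?S 2 zs" and k: "k < 2" and uv: "u \<in> ?S" "v \<in> ?S"
    obtain a0 u0 a1 u1 where zs: "zs = [(a0,u0),(a1,u1)]" using two ok unfolding args_ok_def by fastforce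
    have k01: "k = 0 \<or> k = 1" using k by auto
    show "phi_xy n estar x y (zs[k := (fst (zs ! k), sA c u + v)]) =
             c * phi_xy n estar x y (zs[k := (fst (zs ! k), u)]) + phi_xy n estar x y (zs[k := (fst (zs ! k), v)])"
      using k01
    proof
      assume "k = 0" thus ?thesis using Dl1[OF uv, of c u1] by (simp add: zs phi2 distrib_left mult.left_commute)
    next
      assume "k = 1" thus ?thesis using Dl2[OF uv, of u0 c] by (simp add: zs phi2 distrib_left mult.left_commute)
    qed
  next
    fix zs :: "('g \<times> 'a) list" and i j :: nat
    assume ok: "args_ok ?S 2 zs" and ij: "i < 2" "j < 2" "i \<noteq> j"
    obtain a0 u0 a1 u1 where zs: "zs = [(a0,u0),(a1,u1)]" using two ok unfolding args_ok_def by fastforce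
    have ij': "(i = 0 \<and> j = 1) \<or> (i = 1 \<and> j = 0)" using ij by auto
    have M_sym: "?M a1 a0 = ?M a0 a1" by (simp add: mult.commute)
    have "phi_xy n estar x y [(a1,u1),(a0,u0)] = - phi_xy n estar x y [(a0,u0),(a1,u1)]"
      unfolding phi2 M_sym by (simp add: algebra_simps)
    thus "phi_xy n estar x y (zs[i := zs ! j, j := zs ! i]) = - phi_xy n estar x y zs"
      using ij' by (auto simp: zs)
  next
    fix zs :: "('g \<times> 'a) list" and c
    assume ok: "args_ok ?S 2 zs"
    obtain a0 u0 a1 u1 where zs: "zs = [(a0,u0),(a1,u1)]" using two ok unfolding args_ok_def by fastforce
    have "(\<Sum>k<2. phi_xy n estar x y (zs[k := (br c (fst (zs ! k)), snd (zs ! k))]))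
       = (?M (br c a0) a1 + ?M a0 (br c a1)) * ?D u0 u1"
      by (simp add: zs phi2 numeral_2_eq_2 lessThan_Suc distrib_right)
    also have "\<dots> = 0" using L.M_inv[of c a0 a1] by simp
    finally show "(\<Sum>k<2. phi_xy n estar x y (zs[k := (br c (fst (zs ! k)), snd (zs ! k))])) = 0" .
  qed
  have part2: "ce_diff br (phi_xy n estar x y) zs = 0" if ok: "args_ok ?S 3 zs" for zs
    unfolding ce_diff_def
  proof (intro sum.neutral ballI)
    fix j i assume j: "j \<in> {..<length zs}" and i: "i \<in> {..<j}"
    have ij: "i < length zs" "j < length zs" using i j by auto
    have "snd (zs!i) \<in> ?S" "snd (zs!j) \<in> ?S" using ok ij nth_mem unfolding args_ok_def by blast+
    hence "x (snd (zs!i) * snd (zs!j)) = 0" "y (snd (zs!i) * snd (zs!j)) = 0" using xsq ysq by auto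
    thus "(-1) ^ (i + j) * phi_xy n estar x y ((br (fst (zs ! i)) (fst (zs ! j)), snd (zs ! i) * snd (zs ! j)) # del2 i j zs) = 0"
      by (simp add: phi_eq)
  qed
  have part3: False if psi: "rel_cochain sG br sA ?S 1 \<psi>"
    and eq: "\<forall>zs. args_ok ?S 2 zs \<longrightarrow> phi_xy n estar x y zs = ce_diff br \<psi> zs" for \<psi>
  proof -
    obtain p q where pq: "p \<in> ?S" "q \<in> ?S" "?D p q \<noteq> 0" using D_ne[OF xyind] by blast
    have vsA: "vector_space sA" "\<forall>c p q. sA c (p * q) = sA c p * q"
      "\<forall>i j p q. p \<in> Agr i \<longrightarrow> q \<in> Agr j \<longrightarrow> p * q \<in> Agr (i + j)"
      using gr unfolding graded_comm_algebra_def by auto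
    have pqS: "p * q \<in> ?S" using prod_closed[OF vsA pq(1,2)] .
    have ok1: "args_ok ?S 1 [(0::'g, p*q)]" using pqS by (simp add: args_ok_def)
    note h = conjunct1[OF psi[unfolded rel_cochain_def]]
    have "0 < (1::nat)" by simp
    note hh = conjunct1[OF h[rule_format, OF ok1 this]]
    have "\<psi> [(0, p*q)] = 1 * \<psi> [(0, p*q)] + \<psi> [(0, p*q)]"
      using hh[rule_format, of 1 0 0] by simp
    hence psi0: "\<psi> [(0, p*q)] = 0" by simp
    have n0: "0 < n" using L.n_pos nz by simp
    let ?zs = "[(e 0, p), (e 0, q)]"
    have "phi_xy n estar x y ?zs = ?D p q" using phi2 L.M_e0[OF n0] by simp
    moreover have "args_ok ?S 2 ?zs" using pq unfolding args_ok_def by auto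
    moreover have "ce_diff br \<psi> ?zs = - \<psi> [(br (e 0) (e 0), p * q)]"
      by (simp add: ce_diff_def del2_def numeral_2_eq_2 lessThan_Suc)
    ultimately show False using eq pq psi0 L.alt by auto
  qed
  show ?thesis using part1 part2 part3 by blast
qed
end
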